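(* Fix a strategy $\mathcal{G}$ for the partial feedback game and let $H$ be the random complete history when $\pi\sim\mathcal{S}_{m,n}$ is uniform. There are absolute constants $c,c'>0$ such that if $0<\varepsilon\le \frac18$ and $n$ is sufficiently large in terms of $\varepsilon$ and $m$, then \[\Pr\Big[Y_0(H) > (1+4\varepsilon)\frac{b_0(H)}{n}\Big] \le c'\varepsilon^{-2}e^{-c \varepsilon^4 m}.\]
   Context: $\mathcal{S}_{m,n}$ is the set of words over $[n]$ in which each symbol appears exactly $m$ times (a deck of $mn$ cards). In the partial feedback game the guesser makes guesses $g_1,\dots,g_{mn}\in[n]$ sequentially; after guess $g_t$ they learn only $y_t\in\{0,1\}$, where $y_t=1$ iff $\pi_t=g_t$. A strategy chooses $g_t$ as a function of $(g_1,\dots,g_{t-1},y_1,\dots,y_{t-1})$. A history up to time $s$ is $h_s=((g_r)_{r\le s},(y_r)_{r\le s})$, $H_s$ is the random history up to time $s$, and $H=H_{mn}$. For a history $h_s$, $a_i(h_s)=|\{r\le s:g_r=i\}|$. The $t$-th guess, with $g_t=i$, is called subcritical if $a_i(H_{t-1})<\varepsilon mn$. $b_0(H)$ is the number of subcritical guesses and $Y_0(H)$ is the number of correct subcritical guesses. *)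

theory Defs
  imports "HOL-Probability.Probability"
begin

text \<open>Symbols are 0-indexed: [n] is rendered as {0..<n}.  A deck in S_{m,n} is a list of
  length m*n over {0..<n} in which every symbol occurs exactly m times.\<close>
definition decks :: "nat \<Rightarrow> nat \<Rightarrow> nat list set" where
  "decks m n = {w. length w = m * n \<and> set w \<subseteq> {0..<n} \<and> (\<forall>i<n. count_list w i = m)}"

text \<open>A (deterministic) strategy maps the history so far (list of pairs (guess, feedback))
  to the next guess.  It is valid for n if it always guesses in {0..<n}.\<close>
type_synonym strategy = "(nat \<times> bool) list \<Rightarrow> nat"

definition valid_strategy :: "nat \<Rightarrow> strategy \<Rightarrow> bool" where
  "valid_strategy n S \<longleftrightarrow> (\<forall>h. S h < n)"

text \<open>history S pi s = h_s: the history after s guesses (position t-1 of the list holds (g_t, y_t)).\<close>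
fun history :: "strategy \<Rightarrow> nat list \<Rightarrow> nat \<Rightarrow> (nat \<times> bool) list" where
  "history S \<pi> 0 = []"
| "history S \<pi> (Suc s) =
     (let h = history S \<pi> s; g = S h in h @ [(g, \<pi> ! s = g)])"

definition full_history :: "strategy \<Rightarrow> nat \<Rightarrow> nat \<Rightarrow> nat list \<Rightarrow> (nat \<times> bool) list" where
  "full_history S m n \<pi> = history S \<pi> (m * n)"

definition guess_count :: "nat \<Rightarrow> (nat \<times> bool) list \<Rightarrow> nat" where
  "guess_count i h = card {r. r < length h \<and> fst (h ! r) = i}"

text \<open>Position k (0-indexed; the (k+1)-th guess) of h is subcritical iff
  a_{g}(h_k) < eps*m*n, where g is the guess made there.\<close>
definition subcritical :: "real \<Rightarrow> nat \<Rightarrow> nat \<Rightarrow> (nat \<times> bool) list \<Rightarrow> nat \<Rightarrow> bool" where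
  "subcritical \<epsilon> m n h k \<longleftrightarrow> real (guess_count (fst (h ! k)) (take k h)) < \<epsilon> * real m * real n"

definition b0 :: "real \<Rightarrow> nat \<Rightarrow> nat \<Rightarrow> (nat \<times> bool) list \<Rightarrow> nat" where
  "b0 \<epsilon> m n h = card {k. k < length h \<and> subcritical \<epsilon> m n h k}"

definition Y0 :: "real \<Rightarrow> nat \<Rightarrow> nat \<Rightarrow> (nat \<times> bool) list \<Rightarrow> nat" where
  "Y0 \<epsilon> m n h = card {k. k < length h \<and> subcritical \<epsilon> m n h k \<and> snd (h ! k)}"

end

theory Submission
  imports Defs
begin


lemma length_history[simp]: "length (history S \<pi> k) = k"
  by (induction k) (simp_all add: Let_def)

lemma history_Suc': "history S \<pi> (Suc k) = history S \<pi> k @ [(S (history S \<pi> k), \<pi> ! k = S (history S \<pi> k))]"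
  by (simp add: Let_def)

declare history.simps(2)[simp del]
declare history_Suc'[simp]

lemma take_history: "j \<le> k \<Longrightarrow> take j (history S \<pi> k) = history S \<pi> j"
proof (induction k)
  case 0 then show ?case by simp
next
  case (Suc k)
  show ?case
  proof (cases "j = Suc k")
    case True then show ?thesis by simp
  next
    case False
    then have "j \<le> k" using Suc by simp
    then show ?thesis using Suc by (simp add: history_Suc')
  qed
qed

lemma nth_history: "j < k \<Longrightarrow> history S \<pi> k ! j = (S (history S \<pi> j), \<pi> ! j = S (history S \<pi> j))"
proof -
  assume "j < k"
  then have "history S \<pi> k ! j = take (Suc j) (history S \<pi> k) ! j" by simp
  also have "\<dots> = history S \<pi> (Suc j) ! j" using \<open>j < k\<close> by (simp add: take_history)
  also have "\<dots> = (S (history S \<pi> j), \<pi> ! j = S (history S \<pi> j))"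
    by (simp add: history_Suc' nth_append)
  finally show ?thesis .
qed

lemma history_cong:
  "(\<forall>s<k. (\<pi> ! s = fst (history S \<pi> k ! s)) = (\<pi>' ! s = fst (history S \<pi> k ! s)))
   \<Longrightarrow> history S \<pi>' k = history S \<pi> k"
proof (induction k)
  case 0 then show ?case by simp
next
  case (Suc k)
  have "\<forall>s<k. (\<pi> ! s = fst (history S \<pi> k ! s)) = (\<pi>' ! s = fst (history S \<pi> k ! s))"
  proof (intro allI impI)
    fix s assume "s < k"
    then have "history S \<pi> (Suc k) ! s = history S \<pi> k ! s"
      by (simp add: history_Suc' nth_append)
    then show "(\<pi> ! s = fst (history S \<pi> k ! s)) = (\<pi>' ! s = fst (history S \<pi> k ! s))"
      using Suc.prems \<open>s < k\<close> by (metis less_SucI)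
  qed
  then have IH: "history S \<pi>' k = history S \<pi> k" using Suc.IH by blast
  have "(\<pi> ! k = S (history S \<pi> k)) = (\<pi>' ! k = S (history S \<pi> k))"
    using Suc.prems[rule_format, of k] by (simp add: history_Suc' nth_append)
  then show ?case using IH by (simp add: history_Suc')
qed

definition cardP :: "((nat \<times> bool) list \<Rightarrow> (nat \<times> bool) \<Rightarrow> bool) \<Rightarrow> (nat \<times> bool) list \<Rightarrow> nat" where
  "cardP P h = card {j. j < length h \<and> P (take j h) (h ! j)}"

lemma cardP_Nil[simp]: "cardP P [] = 0" by (simp add: cardP_def)

lemma cardP_snoc: "cardP P (h @ [x]) = cardP P h + (if P h x then 1 else 0)"
proof -
  have eq: "{j. j < length (h @ [x]) \<and> P (take j (h @ [x])) ((h @ [x]) ! j)} =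
        {j. j < length h \<and> P (take j h) (h ! j)} \<union> (if P h x then {length h} else {})"
    by (auto simp: nth_append less_Suc_eq split: if_splits)
  show ?thesis unfolding cardP_def eq
    by (subst card_Un_disjoint) auto
qed

definition corr :: "(nat \<times> bool) list \<Rightarrow> nat" where
  "corr h = card {r. r < length h \<and> snd (h ! r)}"

lemma corr_cardP: "corr h = cardP (\<lambda>_ x. snd x) h"
  by (simp add: corr_def cardP_def)

lemma gc_cardP: "guess_count g h = cardP (\<lambda>_ x. fst x = g) h"
  by (simp add: guess_count_def cardP_def)

lemma card_nth_count: "card {u. u < length xs \<and> xs ! u = x} = count_list xs x"
  by (simp add: count_list_eq_length_filter length_filter_conv_card eq_commute)



lemma finite_decks: "finite (decks m n)"
proof -
  have "decks m n \<subseteq> {xs. set xs \<subseteq> {0..<n} \<and> length xs = m * n}"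
    by (auto simp: decks_def)
  moreover have "finite {xs. set xs \<subseteq> {0..<n} \<and> length xs = m * n}"
    by (rule finite_lists_length_eq) simp
  ultimately show ?thesis by (rule finite_subset)
qed

definition Uset :: "nat \<Rightarrow> (nat \<times> bool) list \<Rightarrow> nat \<Rightarrow> nat set" where
  "Uset M h g = {u. u < M \<and> (length h \<le> u \<or> (fst (h ! u) \<noteq> g \<and> \<not> snd (h ! u)))}"

lemma count_le_m:
  assumes "\<pi> \<in> decks m n" shows "count_list \<pi> g \<le> m"
proof (cases "g < n")
  case True then show ?thesis using assms by (simp add: decks_def)
next
  case False
  then have "g \<notin> set \<pi>" using assms by (auto simp: decks_def)
  then show ?thesis by (simp add: count_list_0_iff)
qed

lemma swap_le:
  assumes hk: "length h = k" and km: "k < m * n" and u: "u \<in> Uset (m*n) h (S h)"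
  shows "card {\<pi> \<in> decks m n. history S \<pi> k = h \<and> \<pi> ! k = S h}
       \<le> card {\<pi> \<in> decks m n. history S \<pi> k = h \<and> \<pi> ! u = S h}"
proof (cases "u = k")
  case True then show ?thesis by simp
next
  case False
  let ?g = "S h"
  define f where "f = (\<lambda>\<pi>::nat list. \<pi>[k := \<pi> ! u, u := \<pi> ! k])"
  have um: "u < m * n" using u by (simp add: Uset_def)
  show ?thesis
  proof (rule card_inj_on_le)
    show "finite {\<pi> \<in> decks m n. history S \<pi> k = h \<and> \<pi> ! u = S h}"
      using finite_decks by simp
    show "inj_on f {\<pi> \<in> decks m n. history S \<pi> k = h \<and> \<pi> ! k = S h}"
    proof (rule inj_on_inverseI[where g = f])
      fix \<pi> assume "\<pi> \<in> {\<pi> \<in> decks m n. history S \<pi> k = h \<and> \<pi> ! k = S h}"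
      then have "length \<pi> = m * n" by (simp add: decks_def)
      then show "f (f \<pi>) = \<pi>" using km um False
        by (intro nth_equalityI) (auto simp: f_def nth_list_update)
    qed
    show "f ` {\<pi> \<in> decks m n. history S \<pi> k = h \<and> \<pi> ! k = S h}
          \<subseteq> {\<pi> \<in> decks m n. history S \<pi> k = h \<and> \<pi> ! u = S h}"
    proof (rule image_subsetI)
      fix \<pi> assume "\<pi> \<in> {\<pi> \<in> decks m n. history S \<pi> k = h \<and> \<pi> ! k = S h}"
      then have pd: "\<pi> \<in> decks m n" and ph: "history S \<pi> k = h" and pk: "\<pi> ! k = S h" by auto
      have len: "length \<pi> = m * n" using pd by (simp add: decks_def)
      have ms: "mset (f \<pi>) = mset \<pi>" unfolding f_def using len km um by (simp add: mset_swap)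
      then have "set (f \<pi>) = set \<pi>" by (metis set_mset_mset)
      moreover have "\<And>i. count_list (f \<pi>) i = count_list \<pi> i" using ms by (metis count_mset)
      moreover have "length (f \<pi>) = length \<pi>" by (simp add: f_def)
      ultimately have A1: "f \<pi> \<in> decks m n" using pd by (simp add: decks_def)
      have A2: "f \<pi> ! u = S h" using len km um pk by (simp add: f_def)
      have "history S (f \<pi>) k = h"
      proof -
        have "\<forall>s<k. (\<pi> ! s = fst (history S \<pi> k ! s)) = (f \<pi> ! s = fst (history S \<pi> k ! s))"
        proof (intro allI impI)
          fix s assume sk: "s < k"
          show "(\<pi> ! s = fst (history S \<pi> k ! s)) = (f \<pi> ! s = fst (history S \<pi> k ! s))"
          proof (cases "s = u")
            case False
            then have "f \<pi> ! s = \<pi> ! s" using sk len km um by (simp add: f_def nth_list_update)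
            then show ?thesis by simp
          next
            case True
            then have uk: "u < k" using sk by simp
            then have c: "fst (h ! u) \<noteq> S h \<and> \<not> snd (h ! u)" using u hk by (simp add: Uset_def)
            have "h ! u = (S (history S \<pi> u), \<pi> ! u = S (history S \<pi> u))"
              using nth_history[OF uk, of S \<pi>] ph by simp
            then have "\<pi> ! u \<noteq> fst (h ! u)" using c by auto
            moreover have "f \<pi> ! u = S h" using len km um pk by (simp add: f_def)
            ultimately show ?thesis using True c ph by auto
          qed
        qed
        then show ?thesis using history_cong ph by metis
      qed
      then show "f \<pi> \<in> {\<pi> \<in> decks m n. history S \<pi> k = h \<and> \<pi> ! u = S h}" using A1 A2 by simp
    qed
  qed
qed



lemma key:
  assumes hk: "length h = k" and km: "k < m * n"
  shows "card {\<pi> \<in> decks m n. history S \<pi> k = h \<and> \<pi> ! k = S h} * card (Uset (m*n) h (S h))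
       \<le> m * card {\<pi> \<in> decks m n. history S \<pi> k = h}"
proof -
  let ?U = "Uset (m*n) h (S h)"
  let ?Dh = "{\<pi> \<in> decks m n. history S \<pi> k = h}"
  have fU: "finite ?U" by (simp add: Uset_def)
  have fD: "finite ?Dh" using finite_decks by simp
  have "card {\<pi> \<in> decks m n. history S \<pi> k = h \<and> \<pi> ! k = S h} * card ?U
      = (\<Sum>u\<in>?U. card {\<pi> \<in> decks m n. history S \<pi> k = h \<and> \<pi> ! k = S h})" by simp
  also have "\<dots> \<le> (\<Sum>u\<in>?U. card {\<pi> \<in> decks m n. history S \<pi> k = h \<and> \<pi> ! u = S h})"
    by (rule sum_mono) (rule swap_le[OF hk km])
  also have "\<dots> = (\<Sum>u\<in>?U. \<Sum>\<pi>\<in>?Dh. if \<pi> ! u = S h then 1 else 0)"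
  proof (rule sum.cong[OF refl])
    fix u
    have "card {\<pi> \<in> decks m n. history S \<pi> k = h \<and> \<pi> ! u = S h} = card {\<pi> \<in> ?Dh. \<pi> ! u = S h}"
      by (rule arg_cong[where f = card]) auto
    also have "\<dots> = (\<Sum>\<pi>\<in>?Dh. if \<pi> ! u = S h then 1 else 0)"
      using fD by (simp add: sum.If_cases Int_def conj_assoc)
    finally show "card {\<pi> \<in> decks m n. history S \<pi> k = h \<and> \<pi> ! u = S h} = (\<Sum>\<pi>\<in>?Dh. if \<pi> ! u = S h then 1 else 0)" .
  qed
  also have "\<dots> = (\<Sum>\<pi>\<in>?Dh. \<Sum>u\<in>?U. if \<pi> ! u = S h then 1 else 0)"
    by (rule sum.swap)
  also have "\<dots> \<le> (\<Sum>\<pi>\<in>?Dh. m)"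
  proof (rule sum_mono)
    fix \<pi> assume "\<pi> \<in> ?Dh"
    then have pd: "\<pi> \<in> decks m n" by simp
    then have len: "length \<pi> = m * n" by (simp add: decks_def)
    have "(\<Sum>u\<in>?U. if \<pi> ! u = S h then 1 else 0) = card {u \<in> ?U. \<pi> ! u = S h}"
      using fU by (simp add: sum.If_cases Int_def)
    also have "\<dots> \<le> card {u. u < length \<pi> \<and> \<pi> ! u = S h}"
      by (rule card_mono) (auto simp: len Uset_def)
    also have "\<dots> = count_list \<pi> (S h)" by (rule card_nth_count)
    also have "\<dots> \<le> m" by (rule count_le_m[OF pd])
    finally show "(\<Sum>u\<in>?U. if \<pi> ! u = S h then 1 else 0) \<le> m" .
  qed
  also have "\<dots> = m * card ?Dh" by simp
  finally show ?thesis .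
qed

lemma card_U_ge1: "length h = k \<Longrightarrow> k < M \<Longrightarrow> M - k \<le> card (Uset M h g)"
proof -
  assume a: "length h = k" "k < M"
  have "{k..<M} \<subseteq> Uset M h g" using a by (auto simp: Uset_def)
  then have "card {k..<M} \<le> card (Uset M h g)" by (rule card_mono[rotated]) (simp add: Uset_def)
  then show ?thesis by simp
qed

lemma card_U_ge2: "length h = k \<Longrightarrow> k \<le> M \<Longrightarrow> M \<le> card (Uset M h g) + guess_count g h + corr h"
proof -
  assume a: "length h = k" "k \<le> M"
  have "{..<M} \<subseteq> Uset M h g \<union> {r. r < length h \<and> fst (h ! r) = g} \<union> {r. r < length h \<and> snd (h ! r)}"
    using a by (auto simp: Uset_def)
  then have "card {..<M} \<le> card (Uset M h g \<union> {r. r < length h \<and> fst (h ! r) = g} \<union> {r. r < length h \<and> snd (h ! r)})"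
    by (rule card_mono[rotated]) (simp add: Uset_def)
  also have "\<dots> \<le> card (Uset M h g) + card {r. r < length h \<and> fst (h ! r) = g} + card {r. r < length h \<and> snd (h ! r)}"
    by (meson card_Un_le add_le_mono le_trans order_refl)
  finally show ?thesis by (simp add: guess_count_def corr_def)
qed



lemma sumA:
  assumes km: "k < m * n" and nn: "\<And>h. \<Phi> h \<ge> (0::real)"
  shows "(\<Sum>\<pi>\<in>decks m n. \<Phi> (history S \<pi> k) * (if \<pi> ! k = S (history S \<pi> k) then 1 else 0))
    \<le> real m * (\<Sum>\<pi>\<in>decks m n. \<Phi> (history S \<pi> k) / real (card (Uset (m*n) (history S \<pi> k) (S (history S \<pi> k)))))"
proof -
  let ?D = "decks m n"
  let ?g = "\<lambda>\<pi>. history S \<pi> k"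
  let ?T = "?g ` ?D"
  let ?cU = "\<lambda>h. real (card (Uset (m*n) h (S h)))"
  have fD: "finite ?D" by (rule finite_decks)
  have fT: "finite ?T" using fD by simp
  have "(\<Sum>\<pi>\<in>?D. \<Phi> (?g \<pi>) * (if \<pi> ! k = S (?g \<pi>) then 1 else 0))
      = (\<Sum>h\<in>?T. \<Sum>\<pi>\<in>{\<pi> \<in> ?D. ?g \<pi> = h}. \<Phi> (?g \<pi>) * (if \<pi> ! k = S (?g \<pi>) then 1 else 0))"
    by (rule sum.group[symmetric, OF fD fT]) simp
  also have "\<dots> = (\<Sum>h\<in>?T. \<Phi> h * real (card {\<pi> \<in> ?D. ?g \<pi> = h \<and> \<pi> ! k = S h}))"
  proof (rule sum.cong[OF refl])
    fix h assume "h \<in> ?T"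
    have "(\<Sum>\<pi>\<in>{\<pi> \<in> ?D. ?g \<pi> = h}. \<Phi> (?g \<pi>) * (if \<pi> ! k = S (?g \<pi>) then 1 else 0))
        = (\<Sum>\<pi>\<in>{\<pi> \<in> ?D. ?g \<pi> = h}. \<Phi> h * (if \<pi> ! k = S h then 1 else 0))"
      by (rule sum.cong[OF refl]) simp
    also have "\<dots> = \<Phi> h * (\<Sum>\<pi>\<in>{\<pi> \<in> ?D. ?g \<pi> = h}. (if \<pi> ! k = S h then 1 else 0))"
      by (rule sum_distrib_left[symmetric])
    also have "(\<Sum>\<pi>\<in>{\<pi> \<in> ?D. ?g \<pi> = h}. (if \<pi> ! k = S h then 1 else 0)) = real (card {\<pi> \<in> ?D. ?g \<pi> = h \<and> \<pi> ! k = S h})"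
      using fD by (simp add: sum.If_cases Int_def conj_assoc)
    finally show "(\<Sum>\<pi>\<in>{\<pi> \<in> ?D. ?g \<pi> = h}. \<Phi> (?g \<pi>) * (if \<pi> ! k = S (?g \<pi>) then 1 else 0))
        = \<Phi> h * real (card {\<pi> \<in> ?D. ?g \<pi> = h \<and> \<pi> ! k = S h})" .
  qed
  also have "\<dots> \<le> (\<Sum>h\<in>?T. real m * (\<Phi> h / ?cU h) * real (card {\<pi> \<in> ?D. ?g \<pi> = h}))"
  proof (rule sum_mono)
    fix h assume "h \<in> ?T"
    then have hk: "length h = k" by auto
    have "1 \<le> card (Uset (m*n) h (S h))" using card_U_ge1[OF hk km, of "S h"] km by linarith
    then have c1: "?cU h \<ge> 1" by simp
    have kk0: "real (card {\<pi> \<in> ?D. ?g \<pi> = h \<and> \<pi> ! k = S h} * card (Uset (m*n) h (S h))) \<le> real (m * card {\<pi> \<in> ?D. ?g \<pi> = h})"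
      by (simp only: of_nat_le_iff) (rule key[OF hk km])
    have kk: "real (card {\<pi> \<in> ?D. ?g \<pi> = h \<and> \<pi> ! k = S h}) * ?cU h \<le> real m * real (card {\<pi> \<in> ?D. ?g \<pi> = h})"
      using kk0 by simp
    have "\<Phi> h * real (card {\<pi> \<in> ?D. ?g \<pi> = h \<and> \<pi> ! k = S h})
        = (\<Phi> h / ?cU h) * (real (card {\<pi> \<in> ?D. ?g \<pi> = h \<and> \<pi> ! k = S h}) * ?cU h)"
      using c1 by (simp add: divide_simps)
    also have "\<dots> \<le> (\<Phi> h / ?cU h) * (real m * real (card {\<pi> \<in> ?D. ?g \<pi> = h}))"
      by (rule mult_left_mono[OF kk]) (use nn c1 in simp)
    finally show "\<Phi> h * real (card {\<pi> \<in> ?D. ?g \<pi> = h \<and> \<pi> ! k = S h})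
        \<le> real m * (\<Phi> h / ?cU h) * real (card {\<pi> \<in> ?D. ?g \<pi> = h})" by (simp only: mult_ac)
  qed
  also have "\<dots> = real m * (\<Sum>h\<in>?T. \<Sum>\<pi>\<in>{\<pi> \<in> ?D. ?g \<pi> = h}. \<Phi> (?g \<pi>) / ?cU (?g \<pi>))"
  proof -
    have i: "(\<Sum>\<pi>\<in>{\<pi> \<in> ?D. ?g \<pi> = h}. \<Phi> (?g \<pi>) / ?cU (?g \<pi>)) = real (card {\<pi> \<in> ?D. ?g \<pi> = h}) * (\<Phi> h / ?cU h)" for h
    proof -
      have "(\<Sum>\<pi>\<in>{\<pi> \<in> ?D. ?g \<pi> = h}. \<Phi> (?g \<pi>) / ?cU (?g \<pi>)) = (\<Sum>\<pi>\<in>{\<pi> \<in> ?D. ?g \<pi> = h}. \<Phi> h / ?cU h)"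
        by (rule sum.cong[OF refl]) simp
      then show ?thesis by simp
    qed
    show ?thesis unfolding i sum_distrib_left by (rule sum.cong[OF refl]) (simp only: mult_ac)
  qed
  also have "(\<Sum>h\<in>?T. \<Sum>\<pi>\<in>{\<pi> \<in> ?D. ?g \<pi> = h}. \<Phi> (?g \<pi>) / ?cU (?g \<pi>)) = (\<Sum>\<pi>\<in>?D. \<Phi> (?g \<pi>) / ?cU (?g \<pi>))"
    by (rule sum.group[OF fD fT]) simp
  finally show ?thesis .
qed



definition cntg :: "real \<Rightarrow> real \<Rightarrow> nat \<Rightarrow> nat \<Rightarrow> (nat \<times> bool) list \<Rightarrow> nat \<Rightarrow> bool" where
  "cntg \<epsilon> \<delta> m n h g \<longleftrightarrow> real (guess_count g h) < \<epsilon> * m * n \<and> real (corr h) \<le> \<delta> * m * n"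

definition Xc where "Xc \<epsilon> \<delta> m n h = cardP (\<lambda>h' x. cntg \<epsilon> \<delta> m n h' (fst x) \<and> snd x) h"
definition Bc where "Bc \<epsilon> \<delta> m n h = cardP (\<lambda>h' x. cntg \<epsilon> \<delta> m n h' (fst x)) h"
definition Wt where "Wt \<theta> \<alpha> \<epsilon> \<delta> m n h = exp (\<theta> * real (Xc \<epsilon> \<delta> m n h) - \<alpha> * real (Bc \<epsilon> \<delta> m n h))"

lemma Wt_snoc:
  "Wt \<theta> \<alpha> \<epsilon> \<delta> m n (h @ [(g, b)]) = Wt \<theta> \<alpha> \<epsilon> \<delta> m n h +
     (Wt \<theta> \<alpha> \<epsilon> \<delta> m n h * (if cntg \<epsilon> \<delta> m n h g then 1 else 0)) *
       (exp (-\<alpha>) * (1 + (exp \<theta> - 1) * (if b then 1 else 0)) - 1)"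
proof -
  have X: "Xc \<epsilon> \<delta> m n (h @ [(g, b)]) = Xc \<epsilon> \<delta> m n h + (if cntg \<epsilon> \<delta> m n h g \<and> b then 1 else 0)"
    by (simp add: Xc_def cardP_snoc)
  have B: "Bc \<epsilon> \<delta> m n (h @ [(g, b)]) = Bc \<epsilon> \<delta> m n h + (if cntg \<epsilon> \<delta> m n h g then 1 else 0)"
    by (simp add: Bc_def cardP_snoc)
  have e: "exp (\<theta> * real (x + a) - \<alpha> * real (y + c)) = exp (\<theta> * real x - \<alpha> * real y) * exp (\<theta> * real a - \<alpha> * real c)"
    for x a y c :: nat
    by (simp add: exp_add[symmetric] algebra_simps)
  show ?thesis unfolding Wt_def X B e
    by (cases "cntg \<epsilon> \<delta> m n h g"; cases b) (simp_all add: exp_diff exp_minus field_simps)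
qed

lemma exp_fact: "(y::real) \<ge> 0 \<Longrightarrow> exp (- y) * (1 + y) \<le> 1"
proof -
  assume "y \<ge> 0"
  have "1 + y \<le> exp y" by (rule exp_ge_add_one_self)
  then have "exp (-y) * (1 + y) \<le> exp (-y) * exp y" by (simp)
  also have "\<dots> = 1" by (simp add: exp_minus)
  finally show ?thesis .
qed

lemma W_step:
  assumes km: "k < m * n" and q: "0 < 1 - \<epsilon> - \<delta>" and th: "0 \<le> \<theta>"
    and al: "\<alpha> = (exp \<theta> - 1) / (real n * (1 - \<epsilon> - \<delta>))"
  shows "(\<Sum>\<pi>\<in>decks m n. Wt \<theta> \<alpha> \<epsilon> \<delta> m n (history S \<pi> (Suc k)))
     \<le> (\<Sum>\<pi>\<in>decks m n. Wt \<theta> \<alpha> \<epsilon> \<delta> m n (history S \<pi> k))"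
proof -
  let ?D = "decks m n"
  let ?W = "Wt \<theta> \<alpha> \<epsilon> \<delta> m n"
  let ?hk = "\<lambda>\<pi>. history S \<pi> k"
  define \<Phi> where "\<Phi> h = ?W h * (if cntg \<epsilon> \<delta> m n h (S h) then 1 else 0)" for h
  define p where "p = 1 / (real n * (1 - \<epsilon> - \<delta>))"
  have nn: "\<Phi> h \<ge> 0" for h by (simp add: \<Phi>_def Wt_def)
  have "m * n > 0" using km by linarith
  then have m0: "m > 0" and n0: "n > 0" by (auto simp: nat_0_less_mult_iff)
  have p0: "p > 0" using q n0 by (simp add: p_def)
  have ee: "exp \<theta> - 1 \<ge> 0" using th by simp
  have al': "\<alpha> = (exp \<theta> - 1) * p" by (simp add: al p_def)
  have hit: "(\<Sum>\<pi>\<in>?D. \<Phi> (?hk \<pi>) * (if \<pi> ! k = S (?hk \<pi>) then 1 else 0)) \<le> p * (\<Sum>\<pi>\<in>?D. \<Phi> (?hk \<pi>))"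
  proof -
    have "(\<Sum>\<pi>\<in>?D. \<Phi> (?hk \<pi>) * (if \<pi> ! k = S (?hk \<pi>) then 1 else 0))
        \<le> real m * (\<Sum>\<pi>\<in>?D. \<Phi> (?hk \<pi>) / real (card (Uset (m*n) (?hk \<pi>) (S (?hk \<pi>)))))"
      by (rule sumA[OF km nn])
    also have "\<dots> \<le> real m * (\<Sum>\<pi>\<in>?D. \<Phi> (?hk \<pi>) / (real m * real n * (1 - \<epsilon> - \<delta>)))"
    proof (rule mult_left_mono[OF sum_mono])
      fix \<pi> assume "\<pi> \<in> ?D"
      show "\<Phi> (?hk \<pi>) / real (card (Uset (m*n) (?hk \<pi>) (S (?hk \<pi>)))) \<le> \<Phi> (?hk \<pi>) / (real m * real n * (1 - \<epsilon> - \<delta>))"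
      proof (cases "cntg \<epsilon> \<delta> m n (?hk \<pi>) (S (?hk \<pi>))")
        case False then show ?thesis by (simp add: \<Phi>_def)
      next
        case True
        have "m * n \<le> card (Uset (m*n) (?hk \<pi>) (S (?hk \<pi>))) + guess_count (S (?hk \<pi>)) (?hk \<pi>) + corr (?hk \<pi>)"
          by (rule card_U_ge2) (use km in auto)
        then have "real m * real n \<le> real (card (Uset (m*n) (?hk \<pi>) (S (?hk \<pi>)))) + real (guess_count (S (?hk \<pi>)) (?hk \<pi>)) + real (corr (?hk \<pi>))"
          by (metis of_nat_add of_nat_le_iff of_nat_mult)
        moreover have "real (guess_count (S (?hk \<pi>)) (?hk \<pi>)) < \<epsilon> * m * n" "real (corr (?hk \<pi>)) \<le> \<delta> * m * n"
          using True by (auto simp: cntg_def)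
        ultimately have c: "real m * real n * (1 - \<epsilon> - \<delta>) < real (card (Uset (m*n) (?hk \<pi>) (S (?hk \<pi>))))"
          by (simp add: algebra_simps)
        have pos: "0 < real m * real n * (1 - \<epsilon> - \<delta>)" using m0 n0 q by simp
        show ?thesis
          by (rule divide_left_mono) (use nn c pos in auto)
      qed
    qed simp
    also have "\<dots> = p * (\<Sum>\<pi>\<in>?D. \<Phi> (?hk \<pi>))"
      using m0 by (simp add: p_def sum_divide_distrib[symmetric])
    finally show ?thesis .
  qed
  have "(\<Sum>\<pi>\<in>?D. ?W (history S \<pi> (Suc k))) =
     (\<Sum>\<pi>\<in>?D. ?W (?hk \<pi>) + \<Phi> (?hk \<pi>) * (exp (-\<alpha>) * (1 + (exp \<theta> - 1) * (if \<pi> ! k = S (?hk \<pi>) then 1 else 0)) - 1))"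
    by (rule sum.cong[OF refl]) (simp add: Wt_snoc \<Phi>_def)
  also have "\<dots> = (\<Sum>\<pi>\<in>?D. ?W (?hk \<pi>)) + (exp (-\<alpha>) - 1) * (\<Sum>\<pi>\<in>?D. \<Phi> (?hk \<pi>))
       + exp (-\<alpha>) * (exp \<theta> - 1) * (\<Sum>\<pi>\<in>?D. \<Phi> (?hk \<pi>) * (if \<pi> ! k = S (?hk \<pi>) then 1 else 0))"
  proof -
    have "(\<Sum>\<pi>\<in>?D. ?W (?hk \<pi>) + \<Phi> (?hk \<pi>) * (exp (-\<alpha>) * (1 + (exp \<theta> - 1) * (if \<pi> ! k = S (?hk \<pi>) then 1 else 0)) - 1))
       = (\<Sum>\<pi>\<in>?D. ?W (?hk \<pi>) + (exp (-\<alpha>) - 1) * \<Phi> (?hk \<pi>) + exp (-\<alpha>) * (exp \<theta> - 1) * (\<Phi> (?hk \<pi>) * (if \<pi> ! k = S (?hk \<pi>) then 1 else 0)))"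
      by (rule sum.cong[OF refl]) (simp add: algebra_simps)
    also have "\<dots> = (\<Sum>\<pi>\<in>?D. ?W (?hk \<pi>)) + (\<Sum>\<pi>\<in>?D. (exp (-\<alpha>) - 1) * \<Phi> (?hk \<pi>)) + (\<Sum>\<pi>\<in>?D. exp (-\<alpha>) * (exp \<theta> - 1) * (\<Phi> (?hk \<pi>) * (if \<pi> ! k = S (?hk \<pi>) then 1 else 0)))"
      by (simp only: sum.distrib)
    finally show ?thesis by (simp only: sum_distrib_left)
  qed
  also have "\<dots> \<le> (\<Sum>\<pi>\<in>?D. ?W (?hk \<pi>)) + (exp (-\<alpha>) - 1) * (\<Sum>\<pi>\<in>?D. \<Phi> (?hk \<pi>))
       + exp (-\<alpha>) * (exp \<theta> - 1) * (p * (\<Sum>\<pi>\<in>?D. \<Phi> (?hk \<pi>)))"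
    by (rule add_left_mono, rule mult_left_mono[OF hit]) (use ee in simp)
  also have "\<dots> = (\<Sum>\<pi>\<in>?D. ?W (?hk \<pi>)) + (exp (-\<alpha>) * (1 + \<alpha>) - 1) * (\<Sum>\<pi>\<in>?D. \<Phi> (?hk \<pi>))"
    by (simp add: al' algebra_simps)
  also have "\<dots> \<le> (\<Sum>\<pi>\<in>?D. ?W (?hk \<pi>))"
  proof -
    have "\<alpha> \<ge> 0" using al' ee p0 by simp
    then have "exp (-\<alpha>) * (1 + \<alpha>) - 1 \<le> 0" using exp_fact by simp
    moreover have "(\<Sum>\<pi>\<in>?D. \<Phi> (?hk \<pi>)) \<ge> 0" by (rule sum_nonneg) (simp add: nn)
    ultimately show ?thesis by (simp add: mult_nonpos_nonneg)
  qed
  finally show ?thesis .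
qed

lemma W_all:
  assumes "k \<le> m * n" and q: "0 < 1 - \<epsilon> - \<delta>" and th: "0 \<le> \<theta>"
    and al: "\<alpha> = (exp \<theta> - 1) / (real n * (1 - \<epsilon> - \<delta>))"
  shows "(\<Sum>\<pi>\<in>decks m n. Wt \<theta> \<alpha> \<epsilon> \<delta> m n (history S \<pi> k)) \<le> real (card (decks m n))"
  using assms(1)
proof (induction k)
  case 0 then show ?case by (simp add: Wt_def Xc_def Bc_def)
next
  case (Suc k)
  then show ?case using W_step[of k m n \<epsilon> \<delta> \<theta> \<alpha> S] q th al by simp
qed



lemma corr_snoc: "corr (h @ [(g, b)]) = corr h + (if b then 1 else 0)"
  by (simp add: corr_cardP cardP_snoc)

lemma inv_le: "0 < (r::real) \<Longrightarrow> r \<le> c \<Longrightarrow> 1 / c \<le> 1 / r"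
  by (simp add: frac_le)

lemma C_step:
  assumes km: "k < m * n"
  shows "(\<Sum>\<pi>\<in>decks m n. real (corr (history S \<pi> (Suc k))))
     \<le> (\<Sum>\<pi>\<in>decks m n. real (corr (history S \<pi> k))) + real (card (decks m n)) * real m / real (m * n - k)"
proof -
  let ?D = "decks m n"
  let ?hk = "\<lambda>\<pi>. history S \<pi> k"
  have "(\<Sum>\<pi>\<in>?D. (\<lambda>_. 1::real) (?hk \<pi>) * (if \<pi> ! k = S (?hk \<pi>) then 1 else 0))
      \<le> real m * (\<Sum>\<pi>\<in>?D. (\<lambda>_. 1::real) (?hk \<pi>) / real (card (Uset (m*n) (?hk \<pi>) (S (?hk \<pi>)))))"
    by (rule sumA[OF km]) simp
  also have "\<dots> \<le> real m * (\<Sum>\<pi>\<in>?D. 1 / real (m * n - k))"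
  proof (rule mult_left_mono[OF sum_mono])
    fix \<pi> assume "\<pi> \<in> ?D"
    have "m * n - k \<le> card (Uset (m*n) (?hk \<pi>) (S (?hk \<pi>)))" by (rule card_U_ge1) (use km in auto)
    then have "real (m * n - k) \<le> real (card (Uset (m*n) (?hk \<pi>) (S (?hk \<pi>))))" by simp
    moreover have "real (m * n - k) > 0" using km by (simp only: of_nat_0_less_iff zero_less_diff)
    ultimately show "1 / real (card (Uset (m*n) (?hk \<pi>) (S (?hk \<pi>)))) \<le> 1 / real (m * n - k)"
      by (intro inv_le) (assumption+)
  qed simp
  finally have hit: "(\<Sum>\<pi>\<in>?D. (if \<pi> ! k = S (?hk \<pi>) then 1 else 0)) \<le> real (card ?D) * real m / real (m * n - k)"
    by (simp add: mult.commute)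
  have "(\<Sum>\<pi>\<in>?D. real (corr (history S \<pi> (Suc k)))) = (\<Sum>\<pi>\<in>?D. real (corr (?hk \<pi>)) + (if \<pi> ! k = S (?hk \<pi>) then 1 else 0))"
    by (rule sum.cong[OF refl]) (simp add: corr_snoc)
  also have "\<dots> = (\<Sum>\<pi>\<in>?D. real (corr (?hk \<pi>))) + (\<Sum>\<pi>\<in>?D. (if \<pi> ! k = S (?hk \<pi>) then 1 else 0))"
    by (simp only: sum.distrib)
  finally show ?thesis by (rule ord_eq_le_trans[OF _ add_left_mono[OF hit]])
qed

lemma C_all:
  assumes "k \<le> m * n"
  shows "(\<Sum>\<pi>\<in>decks m n. real (corr (history S \<pi> k)))
     \<le> real (card (decks m n)) * real m * (\<Sum>j<k. 1 / real (m * n - j))"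
  using assms
proof (induction k)
  case 0 then show ?case by (simp add: corr_def)
next
  case (Suc k)
  then have km: "k < m * n" by simp
  have "(\<Sum>\<pi>\<in>decks m n. real (corr (history S \<pi> (Suc k))))
     \<le> (\<Sum>\<pi>\<in>decks m n. real (corr (history S \<pi> k))) + real (card (decks m n)) * real m / real (m * n - k)"
    by (rule C_step[OF km])
  also have "\<dots> \<le> real (card (decks m n)) * real m * (\<Sum>j<k. 1 / real (m * n - j)) + real (card (decks m n)) * real m / real (m * n - k)"
    using Suc km by simp
  also have "\<dots> = real (card (decks m n)) * real m * (\<Sum>j<Suc k. 1 / real (m * n - j))"
    by (simp add: algebra_simps)
  finally show ?case .
qed

lemma harm_sqrt: "(\<Sum>i<M. 1 / real (Suc i)) \<le> 2 * sqrt (real M)"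
proof (induction M)
  case 0 then show ?case by simp
next
  case (Suc M)
  define x where "x = real (Suc M)"
  define d where "d = sqrt x - sqrt (real M)"
  have x1: "1 \<le> x" by (simp add: x_def)
  have a: "sqrt (real M) \<le> sqrt x" by (simp add: x_def)
  have d0: "0 \<le> d" using a by (simp add: d_def)
  have sx: "sqrt x \<le> x"
  proof -
    have "sqrt x * sqrt x = x" using x1 by simp
    moreover have "1 \<le> sqrt x" using x1 by simp
    then have "sqrt x * 1 \<le> sqrt x * sqrt x" by (intro mult_left_mono) auto
    ultimately show ?thesis by simp
  qed
  have prod: "d * (sqrt x + sqrt (real M)) = 1"
    by (simp add: d_def algebra_simps x_def)
  have s2: "sqrt x + sqrt (real M) \<le> 2 * x" using a sx by linarith
  have "1 \<le> d * (2 * x)" using mult_left_mono[OF s2 d0] prod by linarith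
  then have "1 / x \<le> 2 * d" using x1 by (simp add: divide_le_eq algebra_simps)
  then have "1 / real (Suc M) \<le> 2 * (sqrt (real (Suc M)) - sqrt (real M))" by (simp add: x_def d_def)
  then show ?case using Suc by simp
qed

lemma harm_bound: "(\<Sum>j<M. 1 / real (M - j)) \<le> 2 * sqrt (real M)"
proof -
  have "(\<Sum>j<M. 1 / real (M - j)) = (\<Sum>j<M. (\<lambda>i. 1 / real (Suc i)) (M - Suc j))"
    by (rule sum.cong[OF refl]) (simp add: Suc_diff_Suc)
  also have "\<dots> = (\<Sum>i<M. 1 / real (Suc i))" by (rule sum.nat_diff_reindex)
  finally show ?thesis using harm_sqrt by simp
qed



lemma count_replicate: "count_list (replicate m a) i = (if a = i then m else 0)"
  by (induction m) auto

definition wdeck :: "nat \<Rightarrow> nat \<Rightarrow> nat list" where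
  "wdeck m n = concat (map (\<lambda>i. replicate m i) [0..<n])"

lemma wdeck_props: "length (wdeck m n) = m * n \<and> set (wdeck m n) \<subseteq> {0..<n} \<and>
    (\<forall>i. count_list (wdeck m n) i = (if i < n then m else 0))"
proof (induction n)
  case 0 then show ?case by (simp add: wdeck_def)
next
  case (Suc n)
  have w: "wdeck m (Suc n) = wdeck m n @ replicate m n" by (simp add: wdeck_def)
  show ?case using Suc unfolding w by (auto simp: count_replicate)
qed

lemma decks_ne: "decks m n \<noteq> {}"
proof -
  have "wdeck m n \<in> decks m n" using wdeck_props[of m n] by (simp add: decks_def)
  then show ?thesis by blast
qed

lemma prob_decks: "measure_pmf.prob (pmf_of_set (decks m n)) A = real (card (decks m n \<inter> A)) / real (card (decks m n))"
  using measure_pmf_of_set[OF decks_ne finite_decks] by simp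

lemma gc_le: "guess_count g h \<le> length h"
proof -
  have "guess_count g h \<le> card {..<length h}" unfolding guess_count_def by (rule card_mono) auto
  then show ?thesis by simp
qed

lemma corr_take: "corr (take j h) \<le> corr h"
  unfolding corr_def by (rule card_mono) auto

lemma card_below: assumes "0 \<le> x" "x \<le> real M" shows "x \<le> real (card {k. k < M \<and> real k < x})"
proof -
  have "\<lceil>x\<rceil> \<le> int M" using assms(2) by (simp add: ceiling_le_iff)
  then have "{k. k < M \<and> real k < x} = {..<nat \<lceil>x\<rceil>}"
  proof -
    have kk: "(k < nat \<lceil>x\<rceil>) = (real k < x)" for k
      using less_ceiling_iff[of "int k" x] zless_nat_eq_int_zless[of k "\<lceil>x\<rceil>"] by simp
    show ?thesis using \<open>\<lceil>x\<rceil> \<le> int M\<close> by (auto simp: kk) (use kk in linarith)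
  qed
  then show ?thesis using assms(1) by simp
qed

lemma b0_ge: "0 \<le> \<epsilon> \<Longrightarrow> \<epsilon> \<le> 1 \<Longrightarrow> \<epsilon> * real m * real n \<le> real (b0 \<epsilon> m n (full_history S m n \<pi>))"
proof -
  assume e: "0 \<le> \<epsilon>" "\<epsilon> \<le> 1"
  let ?H = "full_history S m n \<pi>"
  have lenH: "length ?H = m * n" by (simp add: full_history_def)
  have sub: "{k. k < m * n \<and> real k < \<epsilon> * real m * real n} \<subseteq> {k. k < length ?H \<and> subcritical \<epsilon> m n ?H k}"
  proof safe
    fix k assume k: "k < m * n" "real k < \<epsilon> * real m * real n"
    then show "k < length ?H" using lenH by simp
    have "guess_count (fst (?H ! k)) (take k ?H) \<le> k" using gc_le[of _ "take k ?H"] k lenH by simp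
    then show "subcritical \<epsilon> m n ?H k" using k by (simp add: subcritical_def)
  qed
  have "\<epsilon> * real m * real n \<le> real (m * n)" using mult_right_mono[OF e(2), of "real m * real n"] by (simp add: mult.assoc)
  then have "\<epsilon> * real m * real n \<le> real (card {k. k < m * n \<and> real k < \<epsilon> * real m * real n})"
    by (intro card_below) (use e in auto)
  also have "\<dots> \<le> real (card {k. k < length ?H \<and> subcritical \<epsilon> m n ?H k})"
    by (simp only: of_nat_le_iff) (rule card_mono[OF _ sub], simp)
  finally show ?thesis by (simp add: b0_def)
qed

lemma XY_eq:
  assumes "real (corr h) \<le> \<delta> * real m * real n"
  shows "Xc \<epsilon> \<delta> m n h = Y0 \<epsilon> m n h" "Bc \<epsilon> \<delta> m n h = b0 \<epsilon> m n h"
proof -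
  have c: "cntg \<epsilon> \<delta> m n (take j h) g \<longleftrightarrow> real (guess_count g (take j h)) < \<epsilon> * m * n" for j g
    using corr_take[of j h] assms unfolding cntg_def
    by (smt (verit) of_nat_le_iff)
  show "Xc \<epsilon> \<delta> m n h = Y0 \<epsilon> m n h"
    unfolding Xc_def Y0_def cardP_def c subcritical_def by simp
  show "Bc \<epsilon> \<delta> m n h = b0 \<epsilon> m n h"
    unfolding Bc_def b0_def cardP_def c subcritical_def by simp
qed



lemma poly_ineq: "0 < (\<epsilon>::real) \<Longrightarrow> \<epsilon> \<le> 1/8 \<Longrightarrow> 1 \<le> (1 + 3*\<epsilon>) * (1 - \<epsilon>/2) * (1 - \<epsilon> - \<epsilon>/4)"
proof -
  assume e: "0 < \<epsilon>" "\<epsilon> \<le> 1/8"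
  have "(1 + 3*\<epsilon>) * (1 - \<epsilon>/2) * (1 - \<epsilon> - \<epsilon>/4) = 1 + \<epsilon> * (5/4 - 37/8*\<epsilon> + 15/8*\<epsilon>^2)"
    by (simp add: algebra_simps power2_eq_square)
  moreover have "0 \<le> 5/4 - 37/8*\<epsilon> + 15/8*\<epsilon>^2" using e by (simp add: power2_eq_square)
  ultimately show ?thesis using e by simp
qed

lemma kappa:
  assumes e: "0 < \<epsilon>" "\<epsilon> \<le> 1/8" and n: "0 < n"
  shows "\<epsilon>/2 * (1 + 4*\<epsilon>) - real n * ((exp (\<epsilon>/2) - 1) / (real n * (1 - \<epsilon> - \<epsilon>/4))) \<ge> \<epsilon>^2/2"
proof -
  define \<theta> where "\<theta> = \<epsilon>/2"
  define q where "q = 1 - \<epsilon> - \<epsilon>/4"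
  have q0: "q > 0" using e by (simp add: q_def)
  have t0: "0 < \<theta>" "\<theta> < 1" using e by (auto simp: \<theta>_def)
  have "1 - \<theta> \<le> exp (-\<theta>)" using exp_ge_add_one_self[of "-\<theta>"] by simp
  then have "exp \<theta> * (1 - \<theta>) \<le> exp \<theta> * exp (-\<theta>)" by (simp)
  then have "exp \<theta> * (1 - \<theta>) \<le> 1" by (simp add: exp_minus)
  then have et: "exp \<theta> \<le> 1 / (1 - \<theta>)" using t0 by (simp add: le_divide_eq)
  have "real n * ((exp \<theta> - 1) / (real n * q)) = (exp \<theta> - 1) / q" using n by simp
  also have "\<dots> \<le> (1 / (1 - \<theta>) - 1) / q" using et q0 by (simp add: divide_right_mono)
  also have "\<dots> = \<theta> / ((1 - \<theta>) * q)" using t0 q0 by (simp add: field_simps)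
  finally have na: "real n * ((exp \<theta> - 1) / (real n * q)) \<le> \<theta> / ((1 - \<theta>) * q)" .
  have P: "1 \<le> (1 + 3*\<epsilon>) * (1 - \<theta>) * q" using poly_ineq[OF e] by (simp add: \<theta>_def q_def)
  have pos: "0 < (1 - \<theta>) * q" using t0 q0 by simp
  have "\<theta> / ((1 - \<theta>) * q) \<le> \<theta> * (1 + 3*\<epsilon>)"
    using P pos t0 by (simp add: divide_le_eq mult.assoc mult_left_mono)
  then have "\<theta> * (1 + 4*\<epsilon>) - real n * ((exp \<theta> - 1) / (real n * q)) \<ge> \<theta> * \<epsilon>"
    using na by (simp add: algebra_simps)
  then show ?thesis by (simp add: \<theta>_def q_def power2_eq_square)
qed



lemma stepD:
  assumes e: "0 < \<epsilon>" and m: "0 < m" and n: "64 * real m * exp (2 * \<epsilon>^4 * real m) / \<epsilon>^2 \<le> real n"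
  shows "2 * real m * sqrt (real (m * n)) / (\<epsilon>/4 * real m * real n) \<le> 1 / exp (\<epsilon>^4 * real m)"
proof -
  define E where "E = exp (\<epsilon>^4 * real m)"
  have E0: "E > 0" by (simp add: E_def)
  have E2: "exp (2 * \<epsilon>^4 * real m) = E^2" by (simp add: E_def power2_eq_square exp_add[symmetric])
  have n0: "real n > 0"
  proof -
    have "0 < 64 * real m * exp (2 * \<epsilon>^4 * real m) / \<epsilon>^2" using e m by simp
    then show ?thesis using n by linarith
  qed
  have "64 * real m * E^2 \<le> \<epsilon>^2 * real n" using n e E2 by (simp add: divide_le_eq mult.commute)
  then have "64 * real m * real n * E^2 \<le> \<epsilon>^2 * real n * real n"
    using n0 by (smt (verit) mult.commute mult.left_commute mult_right_mono)
  then have "sqrt (64 * real m * real n * E^2) \<le> sqrt ((\<epsilon> * real n)^2)"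
    by (simp add: power2_eq_square algebra_simps)
  moreover have "sqrt (64 * real m * real n * E^2) = 8 * sqrt (real (m * n)) * E"
    using E0 by (simp add: real_sqrt_mult power2_eq_square)
  moreover have "sqrt ((\<epsilon> * real n)^2) = \<epsilon> * real n" using e n0 by simp
  ultimately have key: "8 * sqrt (real (m * n)) * E \<le> \<epsilon> * real n" by simp
  have "2 * real m * sqrt (real (m * n)) / (\<epsilon>/4 * real m * real n) = 8 * sqrt (real (m * n)) / (\<epsilon> * real n)"
    using m e n0 by (simp add: field_simps)
  also have "\<dots> \<le> 1 / E" using key E0 e n0 by (simp add: field_simps)
  finally show ?thesis by (simp add: E_def)
qed



lemma frac_helper: "0 < (a::real) \<Longrightarrow> 0 < d \<Longrightarrow> x * d \<le> a * t \<Longrightarrow> x / a \<le> t / d"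
  by (simp add: field_simps mult.commute)

lemma main_case:
  assumes e: "0 < \<epsilon>" "\<epsilon> \<le> 1/8" and m: "0 < m"
    and n: "64 * real m * exp (2 * \<epsilon>^4 * real m) / \<epsilon>^2 \<le> real n" and n0: "0 < n"
  shows "measure_pmf.prob (pmf_of_set (decks m n))
          {\<pi>. real (Y0 \<epsilon> m n (full_history S m n \<pi>))
                > (1 + 4 * \<epsilon>) * real (b0 \<epsilon> m n (full_history S m n \<pi>)) / real n}
        \<le> 2 / exp (\<epsilon>^4 * real m)"
proof -
  define D where "D = decks m n"
  define H where "H \<pi> = history S \<pi> (m * n)" for \<pi>
  define \<delta> where "\<delta> = \<epsilon>/4"
  define \<theta> where "\<theta> = \<epsilon>/2"
  define \<alpha> where "\<alpha> = (exp \<theta> - 1) / (real n * (1 - \<epsilon> - \<delta>))"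
  define E where "E = exp (\<epsilon>^4 * real m)"
  define Bad where "Bad = {\<pi>. real (Y0 \<epsilon> m n (full_history S m n \<pi>))
                > (1 + 4 * \<epsilon>) * real (b0 \<epsilon> m n (full_history S m n \<pi>)) / real n}"
  define G where "G = {\<pi>. real (corr (H \<pi>)) \<le> \<delta> * real m * real n}"
  have fH: "full_history S m n \<pi> = H \<pi>" for \<pi> by (simp add: full_history_def H_def)
  have fD: "finite D" by (simp add: D_def finite_decks)
  have E0: "E > 0" by (simp add: E_def)
  have q: "0 < 1 - \<epsilon> - \<delta>" using e by (simp add: \<delta>_def)
  have th: "0 \<le> \<theta>" using e by (simp add: \<theta>_def)
  have W0: "Wt \<theta> \<alpha> \<epsilon> \<delta> m n h \<ge> 0" for h by (simp add: Wt_def)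
  have A: "E \<le> Wt \<theta> \<alpha> \<epsilon> \<delta> m n (H \<pi>)" if "\<pi> \<in> D \<inter> Bad \<inter> G" for \<pi>
  proof -
    have g: "real (corr (H \<pi>)) \<le> \<delta> * real m * real n" using that by (simp add: G_def)
    define Y where "Y = real (Y0 \<epsilon> m n (H \<pi>))"
    define B where "B = real (b0 \<epsilon> m n (H \<pi>))"
    have XY: "real (Xc \<epsilon> \<delta> m n (H \<pi>)) = Y" "real (Bc \<epsilon> \<delta> m n (H \<pi>)) = B"
      using XY_eq[OF g] by (simp_all add: Y_def B_def)
    have bad: "Y > (1 + 4 * \<epsilon>) * B / real n" using that by (simp add: Bad_def fH Y_def B_def)
    have Bge: "\<epsilon> * real m * real n \<le> B" using b0_ge[of \<epsilon> m n S \<pi>] e by (simp add: B_def fH)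
    have ka: "\<theta> * (1 + 4*\<epsilon>) - real n * \<alpha> \<ge> \<epsilon>^2/2"
      using kappa[OF e n0] by (simp add: \<theta>_def \<alpha>_def \<delta>_def)
    have s1: "\<theta> * Y - \<alpha> * B > \<theta> * ((1 + 4 * \<epsilon>) * B / real n) - \<alpha> * B"
    proof -
      have "\<theta> * ((1 + 4 * \<epsilon>) * B / real n) < \<theta> * Y"
        by (rule mult_strict_left_mono[OF bad]) (use e in \<open>simp add: \<theta>_def\<close>)
      then show ?thesis by linarith
    qed
    have s2: "\<theta> * ((1 + 4 * \<epsilon>) * B / real n) - \<alpha> * B = B * (\<theta> * (1 + 4*\<epsilon>) - real n * \<alpha>) / real n"
      using n0 by (simp add: field_simps)
    have s3: "B * (\<theta> * (1 + 4*\<epsilon>) - real n * \<alpha>) / real n \<ge> (\<epsilon> * real m * real n) * (\<epsilon>^2/2) / real n"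
    proof -
      have "0 \<le> \<epsilon> * real m * real n" using e by simp
      then have "(\<epsilon> * real m * real n) * (\<epsilon>^2/2) \<le> B * (\<theta> * (1 + 4*\<epsilon>) - real n * \<alpha>)"
        using Bge ka by (intro mult_mono) (auto intro: order.trans[of _ "\<epsilon>^2/2"])
      then show ?thesis using n0 by (intro divide_right_mono) simp_all
    qed
    have s4: "(\<epsilon> * real m * real n) * (\<epsilon>^2/2) / real n = \<epsilon>^3 * real m / 2"
      using n0 by (simp add: field_simps power2_eq_square power3_eq_cube)
    have s5: "\<epsilon>^3 * real m / 2 \<ge> \<epsilon>^4 * real m"
    proof -
      have "\<epsilon>^4 = \<epsilon>^3 * \<epsilon>" by (simp add: power_Suc2 numeral_eq_Suc)
      moreover have "\<epsilon>^3 * \<epsilon> \<le> \<epsilon>^3 / 2" using e by (simp add: mult_left_le)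
      ultimately have "\<epsilon>^4 \<le> \<epsilon>^3 / 2" by simp
      then show ?thesis using m by (simp add: mult_right_mono)
    qed
    have "\<epsilon>^4 * real m < \<theta> * Y - \<alpha> * B" using s1 s2 s3 s4 s5 by linarith
    then show ?thesis unfolding Wt_def E_def XY by simp
  qed
  have B: "real (card (D \<inter> Bad \<inter> G)) * E \<le> real (card D)"
  proof -
    have "real (card (D \<inter> Bad \<inter> G)) * E = (\<Sum>\<pi>\<in>D \<inter> Bad \<inter> G. E)" by simp
    also have "\<dots> \<le> (\<Sum>\<pi>\<in>D \<inter> Bad \<inter> G. Wt \<theta> \<alpha> \<epsilon> \<delta> m n (H \<pi>))" by (rule sum_mono) (rule A)
    also have "\<dots> \<le> (\<Sum>\<pi>\<in>D. Wt \<theta> \<alpha> \<epsilon> \<delta> m n (H \<pi>))" by (rule sum_mono2[OF fD]) (auto simp: W0)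
    also have "\<dots> \<le> real (card D)" unfolding D_def H_def
      by (rule W_all) (use q th in \<open>simp_all add: \<alpha>_def\<close>)
    finally show ?thesis .
  qed
  have C: "real (card (D - G)) * (\<delta> * real m * real n) \<le> real (card D) * (2 * real m * sqrt (real (m * n)))"
  proof -
    have "real (card (D - G)) * (\<delta> * real m * real n) = (\<Sum>\<pi>\<in>D - G. \<delta> * real m * real n)" by simp
    also have "\<dots> \<le> (\<Sum>\<pi>\<in>D - G. real (corr (H \<pi>)))" by (rule sum_mono) (simp add: G_def)
    also have "\<dots> \<le> (\<Sum>\<pi>\<in>D. real (corr (H \<pi>)))" by (rule sum_mono2[OF fD]) auto
    also have "\<dots> \<le> real (card D) * real m * (\<Sum>j<m*n. 1 / real (m * n - j))"
      unfolding D_def H_def by (rule C_all) simp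
    also have "\<dots> \<le> real (card D) * real m * (2 * sqrt (real (m * n)))"
      by (rule mult_left_mono[OF harm_bound]) simp
    finally show ?thesis by (simp add: mult.assoc)
  qed
  have cD: "real (card D) > 0" using fD decks_ne by (simp add: D_def card_gt_0_iff)
  have dpos: "\<delta> * real m * real n > 0" using e m n0 by (simp add: \<delta>_def)
  have C': "real (card (D - G)) / real (card D) \<le> 1 / E"
  proof -
    have "real (card (D - G)) / real (card D) \<le> (2 * real m * sqrt (real (m * n))) / (\<delta> * real m * real n)"
      by (rule frac_helper[OF cD dpos C])
    also have "\<dots> \<le> 1 / E" using stepD[OF e(1) m n] by (simp add: \<delta>_def E_def)
    finally show ?thesis .
  qed
  have B': "real (card (D \<inter> Bad \<inter> G)) / real (card D) \<le> 1 / E"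
    using B cD E0 by (simp add: divide_le_eq field_simps)
  have "card (D \<inter> Bad) \<le> card (D \<inter> Bad \<inter> G) + card (D - G)"
  proof -
    have "D \<inter> Bad \<subseteq> (D \<inter> Bad \<inter> G) \<union> (D - G)" by auto
    then have "card (D \<inter> Bad) \<le> card ((D \<inter> Bad \<inter> G) \<union> (D - G))" by (rule card_mono[rotated]) (use fD in simp)
    also have "\<dots> \<le> card (D \<inter> Bad \<inter> G) + card (D - G)" by (rule card_Un_le)
    finally show ?thesis .
  qed
  then have "real (card (D \<inter> Bad)) / real (card D) \<le> real (card (D \<inter> Bad \<inter> G)) / real (card D) + real (card (D - G)) / real (card D)"
    using cD by (simp add: add_divide_distrib[symmetric] divide_right_mono)
  also have "\<dots> \<le> 2 / E" using B' C' by simp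
  finally have fin: "real (card (D \<inter> Bad)) / real (card D) \<le> 2 / E" .
  have "measure_pmf.prob (pmf_of_set D) Bad = real (card (D \<inter> Bad)) / real (card D)"
    unfolding D_def by (rule prob_decks)
  then show ?thesis using fin by (simp add: D_def Bad_def E_def)
qed



lemma powr_m2: "0 < (\<epsilon>::real) \<Longrightarrow> \<epsilon> \<le> 1/8 \<Longrightarrow> 64 \<le> \<epsilon> powr (-2)"
proof -
  assume e: "0 < \<epsilon>" "\<epsilon> \<le> 1/8"
  have "\<epsilon> powr (-2) = 1 / \<epsilon>^2" using e by (simp add: powr_minus_divide)
  moreover have "\<epsilon>^2 \<le> (1/8)^2" using e by (intro power_mono) auto
  then have "\<epsilon>^2 \<le> 1/64" by (simp add: power_divide)
  then have "64 * \<epsilon>^2 \<le> 1" by linarith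
  then have "64 \<le> 1 / \<epsilon>^2" using e by (simp add: le_divide_eq mult.commute)
  ultimately show ?thesis by simp
qed

theorem lemma3p9:
  shows "\<exists>c c' :: real. c > 0 \<and> c' > 0 \<and>
    (\<forall>\<epsilon> :: real. 0 < \<epsilon> \<and> \<epsilon> \<le> 1/8 \<longrightarrow>
      (\<forall>m :: nat. \<exists>N :: nat. \<forall>n \<ge> N. \<forall>S :: strategy. valid_strategy n S \<longrightarrow>
        measure_pmf.prob (pmf_of_set (decks m n))
          {\<pi>. real (Y0 \<epsilon> m n (full_history S m n \<pi>))
                > (1 + 4 * \<epsilon>) * real (b0 \<epsilon> m n (full_history S m n \<pi>)) / real n}
        \<le> c' * \<epsilon> powr (-2) * exp (- c * \<epsilon> ^ 4 * real m)))"
proof -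
  have main: "\<forall>\<epsilon> :: real. 0 < \<epsilon> \<and> \<epsilon> \<le> 1/8 \<longrightarrow>
      (\<forall>m :: nat. \<exists>N :: nat. \<forall>n \<ge> N. \<forall>S :: strategy. valid_strategy n S \<longrightarrow>
        measure_pmf.prob (pmf_of_set (decks m n))
          {\<pi>. real (Y0 \<epsilon> m n (full_history S m n \<pi>))
                > (1 + 4 * \<epsilon>) * real (b0 \<epsilon> m n (full_history S m n \<pi>)) / real n}
        \<le> 1 * \<epsilon> powr (-2) * exp (- 1 * \<epsilon> ^ 4 * real m))"
  proof (intro allI impI)
  fix \<epsilon> :: real and m :: nat
  assume e: "0 < \<epsilon> \<and> \<epsilon> \<le> 1/8"
  then have e1: "0 < \<epsilon>" and e2: "\<epsilon> \<le> 1/8" by auto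
  have p64: "64 \<le> \<epsilon> powr (-2)" by (rule powr_m2[OF e1 e2])
  show "\<exists>N :: nat. \<forall>n \<ge> N. \<forall>S :: strategy. valid_strategy n S \<longrightarrow>
        measure_pmf.prob (pmf_of_set (decks m n))
          {\<pi>. real (Y0 \<epsilon> m n (full_history S m n \<pi>))
                > (1 + 4 * \<epsilon>) * real (b0 \<epsilon> m n (full_history S m n \<pi>)) / real n}
        \<le> 1 * \<epsilon> powr (-2) * exp (- 1 * \<epsilon> ^ 4 * real m)"
  proof (cases "m = 0")
    case True
    show ?thesis
    proof (intro exI[of _ 0] allI impI)
      fix n :: nat and S :: strategy
      have "measure_pmf.prob (pmf_of_set (decks m n))
          {\<pi>. real (Y0 \<epsilon> m n (full_history S m n \<pi>))
                > (1 + 4 * \<epsilon>) * real (b0 \<epsilon> m n (full_history S m n \<pi>)) / real n} \<le> 1"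
        by (rule measure_pmf.prob_le_1)
      also have "1 \<le> 1 * \<epsilon> powr (-2) * exp (- 1 * \<epsilon> ^ 4 * real m)" using True p64 by simp
      finally show "measure_pmf.prob (pmf_of_set (decks m n))
          {\<pi>. real (Y0 \<epsilon> m n (full_history S m n \<pi>))
                > (1 + 4 * \<epsilon>) * real (b0 \<epsilon> m n (full_history S m n \<pi>)) / real n}
        \<le> 1 * \<epsilon> powr (-2) * exp (- 1 * \<epsilon> ^ 4 * real m)" .
    qed
  next
    case False
    then have m0: "0 < m" by simp
    define N where "N = nat \<lceil>64 * real m * exp (2 * \<epsilon>^4 * real m) / \<epsilon>^2\<rceil> + 1"
    show ?thesis
    proof (intro exI[of _ N] allI impI)
      fix n :: nat and S :: strategy
      assume nN: "N \<le> n"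
      have n0: "0 < n" using nN by (simp add: N_def)
      have "64 * real m * exp (2 * \<epsilon>^4 * real m) / \<epsilon>^2 \<le> real (nat \<lceil>64 * real m * exp (2 * \<epsilon>^4 * real m) / \<epsilon>^2\<rceil>)"
        by linarith
      also have "\<dots> \<le> real n" using nN by (simp add: N_def)
      finally have nb: "64 * real m * exp (2 * \<epsilon>^4 * real m) / \<epsilon>^2 \<le> real n" .
      have "measure_pmf.prob (pmf_of_set (decks m n))
          {\<pi>. real (Y0 \<epsilon> m n (full_history S m n \<pi>))
                > (1 + 4 * \<epsilon>) * real (b0 \<epsilon> m n (full_history S m n \<pi>)) / real n}
          \<le> 2 / exp (\<epsilon>^4 * real m)"
        by (rule main_case[OF e1 e2 m0 nb n0])
      also have "\<dots> \<le> \<epsilon> powr (-2) / exp (\<epsilon>^4 * real m)"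
        using p64 by (intro divide_right_mono) auto
      also have "\<dots> = 1 * \<epsilon> powr (-2) * exp (- 1 * \<epsilon> ^ 4 * real m)"
        by (simp add: exp_minus divide_inverse)
      finally show "measure_pmf.prob (pmf_of_set (decks m n))
          {\<pi>. real (Y0 \<epsilon> m n (full_history S m n \<pi>))
                > (1 + 4 * \<epsilon>) * real (b0 \<epsilon> m n (full_history S m n \<pi>)) / real n}
        \<le> 1 * \<epsilon> powr (-2) * exp (- 1 * \<epsilon> ^ 4 * real m)" .
    qed
  qed
  qed
  show ?thesis by (rule exI[of _ 1], rule exI[of _ 1]) (use main in simp)
qed


end
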